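(* Let $n\ge 3$ and let $r=(r_1,\dots,r_n)$ be positive real numbers such that $2r_j\le \sum_{i=1}^n r_i$ for every $j$ and $r_1\pm r_2\pm\cdots\pm r_n\neq 0$ for every choice of signs. Let ${\cal U}_r=\{U=(u_1,\dots,u_n)\in (S^4)^n : \sum_{i=1}^n r_iu_i=0\}$, where $S^4\subset\mathbb{R}^5$ is the unit sphere, with $SO(5)$ acting diagonally. Then every degenerate $U\in{\cal U}_r$ is of type $2$ or of type $3$; that is, if the stabilizer of $U$ in $SO(5)$ is nontrivial, then it is a subgroup isomorphic to $SO(2)$ or to $SO(3)$.
   Context: An element $U\in{\cal U}_r$ (equivalently the closed polygon in $\mathbb{R}^5$ with edge vectors $r_iu_i$) is called degenerate if its stabilizer under the diagonal $SO(5)$-action is a nontrivial subgroup of $SO(5)$. A degenerate polygon is of type $k$ if its stabilizer is a subgroup $H_k\subseteq SO(5)$ isomorphic to $SO(k)$. *)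

theory Defs
  imports "HOL-Analysis.Analysis"
begin

definition SO :: "('n::finite) itself \<Rightarrow> (real^'n^'n) set" where
  "SO _ = {A. orthogonal_matrix A \<and> det A = 1}"

definition stabilizer :: "nat \<Rightarrow> (nat \<Rightarrow> real^5) \<Rightarrow> (real^5^5) set" where
  "stabilizer n u = {A \<in> SO TYPE(5). \<forall>i<n. A *v u i = u i}"

definition iso_to_SO :: "(real^'m^'m) set \<Rightarrow> ('k::finite) itself \<Rightarrow> bool" where
  "iso_to_SO G K \<longleftrightarrow> (\<exists>\<phi> :: real^'m^'m \<Rightarrow> real^'k^'k.
      bij_betw \<phi> G (SO K) \<and> (\<forall>A\<in>G. \<forall>B\<in>G. \<phi> (A ** B) = \<phi> A ** \<phi> B))"

definition polygon_space :: "nat \<Rightarrow> (nat \<Rightarrow> real) \<Rightarrow> (nat \<Rightarrow> real^5) set" where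
  "polygon_space n r = {u. (\<forall>i<n. norm (u i) = 1) \<and> (\<Sum>i<n. r i *\<^sub>R u i) = 0}"

end

theory Submission
  imports Defs
begin

lemma UNIV_5: "(UNIV::5 set) = {1,2,3,4,5}"
proof -
  have "card {1,2,3,4,5::5} = 5" by simp
  moreover have "card (UNIV::5 set) = 5" by simp
  ultimately show ?thesis by (metis card_subset_eq finite subset_UNIV)
qed

lemma forall_5: "(\<forall>i::5. P i) \<longleftrightarrow> P 1 \<and> P 2 \<and> P 3 \<and> P 4 \<and> P 5"
  by (metis UNIV_5 UNIV_I empty_iff insert_iff)

lemma sum_5: "sum f (UNIV::5 set) = f 1 + f 2 + f 3 + f 4 + f 5"
  unfolding UNIV_5 by (simp add: ac_simps)

lemma det5_2:
  fixes M :: "real^5^5"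
  assumes "\<And>i j. i \<in> {1,2,3} \<or> j \<in> {1,2,3} \<Longrightarrow> M$i$j = (if i = j then 1 else 0)"
  shows "det M = M$4$4 * M$5$5 - M$4$5 * M$5$4"
proof -
  have f1: "finite {2::5, 3,4,5}" "1 \<notin> {2::5, 3,4,5}" by auto
  have f2: "finite {3::5,4,5}" "2 \<notin> {3::5,4,5}" by auto
  have f3: "finite {4::5,5}" "3 \<notin> {4::5,5}" by auto
  have f4: "finite {5::5}" "4 \<notin> {5::5}" by auto
  show ?thesis
    unfolding det_def UNIV_5
    unfolding sum_over_permutations_insert[OF f1]
    unfolding sum_over_permutations_insert[OF f2]
    unfolding sum_over_permutations_insert[OF f3]
    unfolding sum_over_permutations_insert[OF f4]
    unfolding permutes_sing
    by (simp add: assms sign_swap_id permutation_swap_id sign_compose sign_id swap_id_eq)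
qed

definition fixT :: "5 set \<Rightarrow> (real^5^5) set" where
  "fixT T = {M \<in> SO TYPE(5). \<forall>j\<in>T. M *v axis j 1 = axis j 1}"

lemma fixT_entry:
  assumes "M \<in> fixT T" "i \<in> T \<or> j \<in> T"
  shows "M$i$j = (if i = j then 1 else 0)"
proof -
  have orth: "transpose M ** M = mat 1" and fx: "\<forall>j\<in>T. column j M = axis j 1"
    using assms(1) by (auto simp: fixT_def SO_def orthogonal_matrix matrix_vector_mult_basis)
  have col: "M$i$j = (if i = j then 1 else 0)" if "j \<in> T" for i j
    using fx that by (auto simp: column_def vec_eq_iff axis_def)
  show ?thesis
  proof (cases "j \<in> T")
    case True then show ?thesis using col by simp
  next
    case False
    then have iT: "i \<in> T" using assms(2) by auto
    have h: "\<And>k. (if k = i then 1 else 0) * M$k$j = (if k = i then M$k$j else 0)" by simp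
    have "(transpose M ** M)$i$j = (\<Sum>l\<in>UNIV. (if l = i then 1 else 0) * M$l$j)"
      unfolding matrix_matrix_mult_def transpose_def
      by (simp add: col[OF iT] eq_commute)
    also have "\<dots> = M$i$j" by (simp only: h sum.delta') simp
    finally show ?thesis using orth False iT by (auto simp: mat_def)
  qed
qed

definition phi2 :: "real^5^5 \<Rightarrow> real^2^2" where
  "phi2 M = (\<chi> i j. M $ (if i = 1 then 4 else 5) $ (if j = 1 then 4 else 5))"
definition psi2 :: "real^2^2 \<Rightarrow> real^5^5" where
  "psi2 B = (\<chi> i j. if i \<in> {1,2,3} \<or> j \<in> {1,2,3} then (if i = j then 1 else 0)
      else B $ (if i = 4 then 1 else 2) $ (if j = 4 then 1 else 2))"

lemma iso2: "iso_to_SO (fixT {1,2,3}) TYPE(2)"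
  unfolding iso_to_SO_def
proof (intro exI conjI ballI)
  have pat: "\<And>i j. M \<in> fixT {1,2,3} \<Longrightarrow> i \<in> {1,2,3} \<or> j \<in> {1,2,3} \<Longrightarrow> M$i$j = (if i = j then 1 else 0)"
    for M by (rule fixT_entry)
  show "phi2 (A ** B) = phi2 A ** phi2 B" if "A \<in> fixT {1,2,3}" "B \<in> fixT {1,2,3}" for A B
    by (simp add: vec_eq_iff forall_2 phi2_def matrix_matrix_mult_def sum_5 sum_2 pat[OF that(1)] pat[OF that(2)])
  show "bij_betw phi2 (fixT {1, 2, 3}) (SO TYPE(2))"
  proof (rule bij_betw_byWitness[where f'=psi2])
    show "\<forall>a\<in>fixT {1, 2, 3}. psi2 (phi2 a) = a"
      by (auto simp: vec_eq_iff forall_5 phi2_def psi2_def pat)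
    show "\<forall>a'\<in>SO TYPE(2). phi2 (psi2 a') = a'"
      by (auto simp: vec_eq_iff forall_2 phi2_def psi2_def)
    show "phi2 ` fixT {1, 2, 3} \<subseteq> SO TYPE(2)"
    proof safe
      fix M assume M: "M \<in> fixT {1,2,3}"
      have o: "transpose M ** M = mat 1" "det M = 1" using M by (auto simp: fixT_def SO_def orthogonal_matrix)
      have e: "(transpose M ** M)$i$j = mat 1 $ i $ j" for i j using o by simp
      note e' = e[unfolded matrix_matrix_mult_def transpose_def mat_def, simplified, unfolded sum_5, simplified pat[OF M]]
      have "orthogonal_matrix (phi2 M)"
        unfolding orthogonal_matrix
        using e'[of 4 4] e'[of 4 5] e'[of 5 4] e'[of 5 5]
        by (simp add: vec_eq_iff forall_2 phi2_def matrix_matrix_mult_def transpose_def mat_def sum_2 pat[OF M])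
      moreover have "det (phi2 M) = 1"
        using o(2) det5_2[of M] pat[OF M] by (simp add: det_2 phi2_def)
      ultimately show "phi2 M \<in> SO TYPE(2)" by (simp add: SO_def)
    qed
    show "psi2 ` SO TYPE(2) \<subseteq> fixT {1, 2, 3}"
    proof safe
      fix B :: "real^2^2" assume B: "B \<in> SO TYPE(2)"
      have o: "transpose B ** B = mat 1" "det B = 1" using B by (auto simp: SO_def orthogonal_matrix)
      have e: "(transpose B ** B)$i$j = mat 1 $ i $ j" for i j using o by simp
      note e' = e[unfolded matrix_matrix_mult_def transpose_def mat_def, simplified, unfolded sum_2, simplified]
      have pp: "psi2 B $ i $ j = (if i = j then 1 else 0)" if "i \<in> {1,2,3} \<or> j \<in> {1,2,3}" for i j
        using that by (simp add: psi2_def)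
      have "orthogonal_matrix (psi2 B)"
        unfolding orthogonal_matrix
        using e'[of 1 1] e'[of 1 2] e'[of 2 1] e'[of 2 2]
        by (simp add: vec_eq_iff forall_5 psi2_def matrix_matrix_mult_def transpose_def mat_def sum_5)
      moreover have "det (psi2 B) = 1"
        using o(2) det5_2[of "psi2 B", OF pp] by (simp add: det_2 psi2_def)
      moreover have "\<forall>j\<in>{1,2,3}. psi2 B *v axis j 1 = axis j 1"
        unfolding matrix_vector_mult_basis by (auto simp: column_def vec_eq_iff axis_def psi2_def)
      ultimately show "psi2 B \<in> fixT {1,2,3}" by (simp add: fixT_def SO_def)
    qed
  qed
qed

lemma det5_3:
  fixes M :: "real^5^5"
  assumes "\<And>i j. i \<in> {1,2} \<or> j \<in> {1,2} \<Longrightarrow> M$i$j = (if i = j then 1 else 0)"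
  shows "det M = M$3$3 * M$4$4 * M$5$5 + M$3$4 * M$4$5 * M$5$3 + M$3$5 * M$4$3 * M$5$4
     - M$3$3 * M$4$5 * M$5$4 - M$3$4 * M$4$3 * M$5$5 - M$3$5 * M$4$4 * M$5$3"
proof -
  have f1: "finite {2::5, 3,4,5}" "1 \<notin> {2::5, 3,4,5}" by auto
  have f2: "finite {3::5,4,5}" "2 \<notin> {3::5,4,5}" by auto
  have f3: "finite {4::5,5}" "3 \<notin> {4::5,5}" by auto
  have f4: "finite {5::5}" "4 \<notin> {5::5}" by auto
  show ?thesis
    unfolding det_def UNIV_5
    unfolding sum_over_permutations_insert[OF f1]
    unfolding sum_over_permutations_insert[OF f2]
    unfolding sum_over_permutations_insert[OF f3]
    unfolding sum_over_permutations_insert[OF f4]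
    unfolding permutes_sing
    by (simp add: assms sign_swap_id permutation_swap_id sign_compose sign_id swap_id_eq algebra_simps)
qed

lemma det5_1:
  fixes M :: "real^5^5"
  assumes "\<And>i j. i \<in> {1,2,3,4} \<or> j \<in> {1,2,3,4} \<Longrightarrow> M$i$j = (if i = j then 1 else 0)"
  shows "det M = M$5$5"
proof -
  have f1: "finite {2::5, 3,4,5}" "1 \<notin> {2::5, 3,4,5}" by auto
  have f2: "finite {3::5,4,5}" "2 \<notin> {3::5,4,5}" by auto
  have f3: "finite {4::5,5}" "3 \<notin> {4::5,5}" by auto
  have f4: "finite {5::5}" "4 \<notin> {5::5}" by auto
  show ?thesis
    unfolding det_def UNIV_5
    unfolding sum_over_permutations_insert[OF f1]
    unfolding sum_over_permutations_insert[OF f2]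
    unfolding sum_over_permutations_insert[OF f3]
    unfolding sum_over_permutations_insert[OF f4]
    unfolding permutes_sing
    by (simp add: assms sign_swap_id permutation_swap_id sign_compose sign_id swap_id_eq)
qed

definition phi3 :: "real^5^5 \<Rightarrow> real^3^3" where
  "phi3 M = (\<chi> i j. M $ (if i = 1 then 3 else if i = 2 then 4 else 5) $ (if j = 1 then 3 else if j = 2 then 4 else 5))"
definition psi3 :: "real^3^3 \<Rightarrow> real^5^5" where
  "psi3 B = (\<chi> i j. if i \<in> {1,2} \<or> j \<in> {1,2} then (if i = j then 1 else 0)
      else B $ (if i = 3 then 1 else if i = 4 then 2 else 3) $ (if j = 3 then 1 else if j = 4 then 2 else 3))"

lemma iso3: "iso_to_SO (fixT {1,2}) TYPE(3)"
  unfolding iso_to_SO_def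
proof (intro exI conjI ballI)
  have pat: "\<And>i j. M \<in> fixT {1,2} \<Longrightarrow> i \<in> {1,2} \<or> j \<in> {1,2} \<Longrightarrow> M$i$j = (if i = j then 1 else 0)"
    for M by (rule fixT_entry)
  show "phi3 (A ** B) = phi3 A ** phi3 B" if "A \<in> fixT {1,2}" "B \<in> fixT {1,2}" for A B
    by (simp add: vec_eq_iff forall_3 phi3_def matrix_matrix_mult_def sum_5 sum_3 pat[OF that(1)] pat[OF that(2)])
  show "bij_betw phi3 (fixT {1, 2}) (SO TYPE(3))"
  proof (rule bij_betw_byWitness[where f'=psi3])
    show "\<forall>a\<in>fixT {1, 2}. psi3 (phi3 a) = a"
      by (auto simp: vec_eq_iff forall_5 phi3_def psi3_def pat)
    show "\<forall>a'\<in>SO TYPE(3). phi3 (psi3 a') = a'"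
      by (auto simp: vec_eq_iff forall_3 phi3_def psi3_def)
    show "phi3 ` fixT {1, 2} \<subseteq> SO TYPE(3)"
    proof safe
      fix M assume M: "M \<in> fixT {1,2}"
      have o: "transpose M ** M = mat 1" "det M = 1" using M by (auto simp: fixT_def SO_def orthogonal_matrix)
      have e: "(transpose M ** M)$i$j = mat 1 $ i $ j" for i j using o by simp
      note e' = e[unfolded matrix_matrix_mult_def transpose_def mat_def, simplified, unfolded sum_5, simplified]
      have "orthogonal_matrix (phi3 M)"
        unfolding orthogonal_matrix
        using e'[of 3 3] e'[of 3 4] e'[of 3 5] e'[of 4 3] e'[of 4 4] e'[of 4 5] e'[of 5 3] e'[of 5 4] e'[of 5 5]
        by (simp add: vec_eq_iff forall_3 phi3_def matrix_matrix_mult_def transpose_def mat_def sum_3 pat[OF M])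
      moreover have "det (phi3 M) = 1"
        using o(2) det5_3[of M] pat[OF M] by (simp add: det_3 phi3_def)
      ultimately show "phi3 M \<in> SO TYPE(3)" by (simp add: SO_def)
    qed
    show "psi3 ` SO TYPE(3) \<subseteq> fixT {1, 2}"
    proof safe
      fix B :: "real^3^3" assume B: "B \<in> SO TYPE(3)"
      have o: "transpose B ** B = mat 1" "det B = 1" using B by (auto simp: SO_def orthogonal_matrix)
      have e: "(transpose B ** B)$i$j = mat 1 $ i $ j" for i j using o by simp
      note e' = e[unfolded matrix_matrix_mult_def transpose_def mat_def, simplified, unfolded sum_3, simplified]
      have pp: "psi3 B $ i $ j = (if i = j then 1 else 0)" if "i \<in> {1,2} \<or> j \<in> {1,2}" for i j
        using that by (simp add: psi3_def)
      have "orthogonal_matrix (psi3 B)"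
        unfolding orthogonal_matrix
        using e'[of 1 1] e'[of 1 2] e'[of 1 3] e'[of 2 1] e'[of 2 2] e'[of 2 3] e'[of 3 1] e'[of 3 2] e'[of 3 3]
        by (simp add: vec_eq_iff forall_5 psi3_def matrix_matrix_mult_def transpose_def mat_def sum_5)
      moreover have "det (psi3 B) = 1"
        using o(2) det5_3[of "psi3 B", OF pp] by (simp add: det_3 psi3_def)
      moreover have "\<forall>j\<in>{1,2}. psi3 B *v axis j 1 = axis j 1"
        unfolding matrix_vector_mult_basis by (auto simp: column_def vec_eq_iff axis_def psi3_def)
      ultimately show "psi3 B \<in> fixT {1,2}" by (simp add: fixT_def SO_def)
    qed
  qed
qed

lemma mat1_fixT: "mat 1 \<in> fixT T"
  by (simp add: fixT_def SO_def orthogonal_matrix_id)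

lemma fixT4: "fixT {1,2,3,4} = {mat 1}"
proof safe
  fix M assume M: "M \<in> fixT {1,2,3,4}"
  note pat = fixT_entry[OF M]
  have "det M = 1" using M by (simp add: fixT_def SO_def)
  then have "M$5$5 = 1" using det5_1[of M] pat by simp
  then show "M = mat 1"
    by (simp add: vec_eq_iff forall_5 mat_def pat)
qed (rule mat1_fixT)

lemma fixT5: "fixT UNIV = {mat 1}"
proof safe
  fix M assume M: "M \<in> fixT UNIV"
  show "M = mat 1" using fixT_entry[OF M] by (simp add: vec_eq_iff mat_def)
qed (rule mat1_fixT)

lemma SO_conj:
  fixes Q A :: "real^5^5"
  assumes "orthogonal_matrix Q" "A \<in> SO TYPE(5)"
  shows "transpose Q ** A ** Q \<in> SO TYPE(5)" "Q ** A ** transpose Q \<in> SO TYPE(5)"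
proof -
  have dq: "det Q * det Q = 1"
    using assms(1) det_mul[of Q "transpose Q"] by (simp add: orthogonal_matrix_def)
  show "transpose Q ** A ** Q \<in> SO TYPE(5)" "Q ** A ** transpose Q \<in> SO TYPE(5)"
    using assms dq by (auto simp: SO_def orthogonal_matrix_mul det_mul)
qed

lemma fix_span:
  fixes A :: "real^5^5"
  assumes "\<forall>x\<in>S. A *v x = x" "x \<in> span S"
  shows "A *v x = x"
proof -
  have "span S \<subseteq> {x. A *v x = x}"
    by (rule span_minimal) (use assms(1) in \<open>auto simp: subspace_def matrix_vector_right_distrib matrix_vector_mult_scaleR\<close>)
  then show ?thesis using assms(2) by auto
qed

lemma transfer_iso:
  fixes Q :: "real^5^5" and G H :: "(real^5^5) set"
  assumes oQ: "orthogonal_matrix Q"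
    and GS: "G \<subseteq> SO TYPE(5)" and HS: "H \<subseteq> SO TYPE(5)"
    and iff: "\<And>A. A \<in> SO TYPE(5) \<Longrightarrow> (A \<in> G \<longleftrightarrow> transpose Q ** A ** Q \<in> H)"
  shows "bij_betw (\<lambda>A. transpose Q ** A ** Q) G H"
    "\<And>A B. transpose Q ** (A ** B) ** Q = (transpose Q ** A ** Q) ** (transpose Q ** B ** Q)"
proof -
  have q1: "Q ** transpose Q = mat 1" "transpose Q ** Q = mat 1" using oQ by (auto simp: orthogonal_matrix_def)
  show "transpose Q ** (A ** B) ** Q = (transpose Q ** A ** Q) ** (transpose Q ** B ** Q)" for A B
  proof -
    have "(transpose Q ** A ** Q) ** (transpose Q ** B ** Q) = transpose Q ** A ** (Q ** transpose Q) ** B ** Q"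
      by (simp add: matrix_mul_assoc)
    then show ?thesis by (simp add: q1 matrix_mul_assoc)
  qed
  show "bij_betw (\<lambda>A. transpose Q ** A ** Q) G H"
  proof (rule bij_betw_byWitness[where f'="\<lambda>M. Q ** M ** transpose Q"])
    have i1: "Q ** (transpose Q ** A ** Q) ** transpose Q = A" for A
    proof -
      have "Q ** (transpose Q ** A ** Q) ** transpose Q = (Q ** transpose Q) ** A ** (Q ** transpose Q)"
        by (simp add: matrix_mul_assoc)
      then show ?thesis by (simp add: q1)
    qed
    have i2: "transpose Q ** (Q ** M ** transpose Q) ** Q = M" for M
    proof -
      have "transpose Q ** (Q ** M ** transpose Q) ** Q = (transpose Q ** Q) ** M ** (transpose Q ** Q)"
        by (simp add: matrix_mul_assoc)
      then show ?thesis by (simp add: q1)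
    qed
    show "\<forall>a\<in>G. Q ** (transpose Q ** a ** Q) ** transpose Q = a" using i1 by auto
    show "\<forall>a'\<in>H. transpose Q ** (Q ** a' ** transpose Q) ** Q = a'" using i2 by auto
    show "(\<lambda>A. transpose Q ** A ** Q) ` G \<subseteq> H" using iff GS by auto
    show "(\<lambda>M. Q ** M ** transpose Q) ` H \<subseteq> G"
    proof safe
      fix M assume "M \<in> H"
      then have "Q ** M ** transpose Q \<in> SO TYPE(5)" using SO_conj(2)[OF oQ] HS by auto
      then show "Q ** M ** transpose Q \<in> G" using iff i2 \<open>M \<in> H\<close> by auto
    qed
  qed
qed

lemma exQ:
  fixes V :: "(real^5) set" and T :: "5 set"
  assumes sV: "subspace V" and cT: "card T = dim V"
  shows "\<exists>Q. orthogonal_matrix Q \<and> (\<forall>j\<in>T. column j Q \<in> V) \<and> V \<subseteq> span ((\<lambda>j. column j Q) ` T)"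
proof -
  obtain B1 where B1: "B1 \<subseteq> V" "pairwise orthogonal B1" "\<And>x. x \<in> B1 \<Longrightarrow> norm x = 1"
     "independent B1" "card B1 = dim V" "span B1 = V"
    using orthonormal_basis_subspace[OF sV] by blast
  define W where "W = {y. \<forall>x\<in>V. orthogonal x y}"
  have sW: "subspace W" unfolding W_def by (rule subspace_orthogonal_to_vectors)
  have "dim {y \<in> UNIV. \<forall>x\<in>V. orthogonal x y} + dim V = dim (UNIV :: (real^5) set)"
    by (rule dim_subspace_orthogonal_to_vectors) (use sV in auto)
  then have dW: "dim W = 5 - dim V" unfolding W_def by simp
  obtain B2 where B2: "B2 \<subseteq> W" "pairwise orthogonal B2" "\<And>x. x \<in> B2 \<Longrightarrow> norm x = 1"
     "independent B2" "card B2 = dim W" "span B2 = W"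
    using orthonormal_basis_subspace[OF sW] by blast
  have fin: "finite B1" "finite B2" using B1(4) B2(4) finiteI_independent by auto
  have cT2: "card (UNIV - T) = 5 - dim V" using cT by (simp add: card_Diff_subset)
  obtain b1 where b1: "bij_betw b1 T B1" using finite_same_card_bij[of T B1] fin cT B1(5) by auto
  obtain b2 where b2: "bij_betw b2 (UNIV - T) B2" using finite_same_card_bij[of "UNIV - T" B2] fin cT2 B2(5) dW by auto
  define q where "q j = (if j \<in> T then b1 j else b2 j)" for j
  define Q :: "real^5^5" where "Q = (\<chi> i j. q j $ i)"
  have cq: "column j Q = q j" for j by (simp add: Q_def column_def)
  have qT: "q j \<in> B1" if "j \<in> T" for j using b1 that by (auto simp: q_def bij_betw_def)
  have qN: "q j \<in> B2" if "j \<notin> T" for j using b2 that by (auto simp: q_def bij_betw_def)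
  have "orthogonal_matrix Q"
    unfolding orthogonal_matrix_orthonormal_columns cq
  proof (intro conjI allI impI)
    fix i show "norm (q i) = 1" using qT qN B1(3) B2(3) by (cases "i \<in> T") auto
  next
    fix i j :: 5 assume ij: "i \<noteq> j"
    show "orthogonal (q i) (q j)"
    proof (cases "i \<in> T"; cases "j \<in> T")
      assume "i \<in> T" "j \<in> T"
      then have "q i \<noteq> q j" using b1 ij by (auto simp: q_def bij_betw_def inj_on_def)
      then show ?thesis using B1(2) qT \<open>i \<in> T\<close> \<open>j \<in> T\<close> by (auto simp: pairwise_def)
    next
      assume "i \<notin> T" "j \<notin> T"
      then have "q i \<noteq> q j" using b2 ij by (auto simp: q_def bij_betw_def inj_on_def)
      then show ?thesis using B2(2) qN \<open>i \<notin> T\<close> \<open>j \<notin> T\<close> by (auto simp: pairwise_def)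
    next
      assume "i \<in> T" "j \<notin> T"
      then have "q i \<in> V" "q j \<in> W" using qT qN B1(1) B2(1) by auto
      then show ?thesis by (auto simp: W_def)
    next
      assume "i \<notin> T" "j \<in> T"
      then have "q j \<in> V" "q i \<in> W" using qT qN B1(1) B2(1) by auto
      then show ?thesis by (auto simp: W_def orthogonal_commute)
    qed
  qed
  moreover have "\<forall>j\<in>T. column j Q \<in> V" using qT B1(1) cq by auto
  moreover have "(\<lambda>j. column j Q) ` T = B1"
    using b1 by (auto simp: cq q_def bij_betw_def)
  ultimately show ?thesis using B1(6) by auto
qed

lemma conj_axis:
  fixes Q A :: "real^5^5"
  assumes oQ: "orthogonal_matrix Q"
  shows "(transpose Q ** A ** Q) *v axis j 1 = axis j 1 \<longleftrightarrow> A *v column j Q = column j Q"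
proof -
  have q1: "Q ** transpose Q = mat 1" "transpose Q ** Q = mat 1" using oQ by (auto simp: orthogonal_matrix_def)
  have e: "(transpose Q ** A ** Q) *v axis j 1 = transpose Q *v (A *v column j Q)"
    by (simp add: matrix_vector_mul_assoc matrix_vector_mult_basis[symmetric] matrix_mul_assoc)
  have c: "transpose Q *v column j Q = axis j 1"
    by (simp add: matrix_vector_mult_basis[symmetric] matrix_vector_mul_assoc q1)
  show ?thesis
  proof
    assume h: "(transpose Q ** A ** Q) *v axis j 1 = axis j 1"
    have qq: "Q *v (transpose Q *v x) = x" for x by (simp only: matrix_vector_mul_assoc q1 matrix_vector_mul_lid)
    have "A *v column j Q = Q *v (transpose Q *v (A *v column j Q))"
      by (simp only: qq)
    also have "\<dots> = Q *v axis j 1" using h e by simp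
    finally show "A *v column j Q = column j Q" by (simp add: matrix_vector_mult_basis)
  next
    assume "A *v column j Q = column j Q"
    then show "(transpose Q ** A ** Q) *v axis j 1 = axis j 1" using e c by simp
  qed
qed

lemma stab_bij:
  fixes Q :: "real^5^5" and T :: "5 set"
  assumes oQ: "orthogonal_matrix Q"
    and cV: "\<forall>j\<in>T. column j Q \<in> span (u ` {..<n})"
    and Vs: "span (u ` {..<n}) \<subseteq> span ((\<lambda>j. column j Q) ` T)"
  shows "bij_betw (\<lambda>A. transpose Q ** A ** Q) (stabilizer n u) (fixT T)"
    "\<And>A B. transpose Q ** (A ** B) ** Q = (transpose Q ** A ** Q) ** (transpose Q ** B ** Q)"
proof -
  have iff: "A \<in> stabilizer n u \<longleftrightarrow> transpose Q ** A ** Q \<in> fixT T" if A: "A \<in> SO TYPE(5)" for A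
  proof -
    have "(\<forall>i<n. A *v u i = u i) \<longleftrightarrow> (\<forall>j\<in>T. A *v column j Q = column j Q)"
    proof
      assume h: "\<forall>i<n. A *v u i = u i"
      show "\<forall>j\<in>T. A *v column j Q = column j Q"
        using fix_span[of "u ` {..<n}" A] h cV by auto
    next
      assume h: "\<forall>j\<in>T. A *v column j Q = column j Q"
      show "\<forall>i<n. A *v u i = u i"
      proof (intro allI impI)
        fix i assume "i < n"
        then have "u i \<in> span ((\<lambda>j. column j Q) ` T)" using Vs span_base[of "u i" "u ` {..<n}"] by auto
        then show "A *v u i = u i" using fix_span[of "(\<lambda>j. column j Q) ` T" A] h by auto
      qed
    qed
    then show ?thesis
      using A SO_conj(1)[OF oQ A] conj_axis[OF oQ, of A]
      by (simp add: stabilizer_def fixT_def)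
  qed
  show "bij_betw (\<lambda>A. transpose Q ** A ** Q) (stabilizer n u) (fixT T)"
    "\<And>A B. transpose Q ** (A ** B) ** Q = (transpose Q ** A ** Q) ** (transpose Q ** B ** Q)"
    using transfer_iso[OF oQ _ _ iff] by (auto simp: stabilizer_def fixT_def)
qed

theorem lemma2p3:
  fixes n :: nat and r :: "nat \<Rightarrow> real" and u :: "nat \<Rightarrow> real^5"
  assumes "n \<ge> 3"
    and "\<forall>i<n. r i > 0"
    and "\<forall>j<n. 2 * r j \<le> (\<Sum>i<n. r i)"
    and "\<forall>\<epsilon>::nat \<Rightarrow> real. (\<forall>i<n. \<epsilon> i = 1 \<or> \<epsilon> i = -1) \<and> \<epsilon> 0 = 1
            \<longrightarrow> (\<Sum>i<n. \<epsilon> i * r i) \<noteq> 0"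
    and "u \<in> polygon_space n r"
    and "stabilizer n u \<noteq> {mat 1}"
  shows "iso_to_SO (stabilizer n u) TYPE(2) \<or> iso_to_SO (stabilizer n u) TYPE(3)"
proof -
  define V where "V = span (u ` {..<n})"
  have sV: "subspace V" unfolding V_def by simp
  have un: "\<forall>i<n. norm (u i) = 1" and usum: "(\<Sum>i<n. r i *\<^sub>R u i) = 0"
    using assms(5) by (auto simp: polygon_space_def)
  have n0: "0 < n" using assms(1) by simp
  have u0: "u 0 \<noteq> 0" using un n0 by auto
  have u0V: "u 0 \<in> V" unfolding V_def using n0 by (intro span_base) auto
  have d5: "dim V \<le> 5" using dim_subset_UNIV_cart[of V] by simp
  have d0: "dim V \<noteq> 0" using u0 u0V by auto
  have d1: "dim V \<noteq> 1"
  proof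
    assume dV: "dim V = 1"
    have inspan: "u i \<in> span {u 0}" if "i < n" for i
    proof (rule ccontr)
      assume nin: "u i \<notin> span {u 0}"
      then have ne: "u i \<noteq> u 0" using span_base[of "u 0" "{u 0}"] by auto
      have "independent {u i, u 0}"
        using nin u0 by (simp add: independent_insert)
      moreover have "{u i, u 0} \<subseteq> V" using u0V that unfolding V_def by (auto intro: span_base)
      ultimately have "card {u i, u 0} \<le> dim V" by (rule independent_card_le_dim[rotated])
      then show False using ne dV by simp
    qed
    define \<epsilon> where "\<epsilon> i = (if u i = u 0 then 1 else -1 :: real)" for i
    have ue: "u i = \<epsilon> i *\<^sub>R u 0 \<and> (\<epsilon> i = 1 \<or> \<epsilon> i = -1)" if i_n: "i < n" for i
    proof -
      obtain c where c: "u i = c *\<^sub>R u 0" using inspan[OF i_n] by (auto simp: span_singleton)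
      have "norm (u i) = \<bar>c\<bar> * norm (u 0)" using c by simp
      then have "\<bar>c\<bar> = 1" using un i_n n0 by auto
      then have "c = 1 \<or> c = -1" by auto
      have nm: "u 0 \<noteq> - u 0"
      proof
        assume h: "u 0 = - u 0"
        have "(2::real) *\<^sub>R u 0 = u 0 + u 0" by (simp add: scaleR_2)
        also have "\<dots> = u 0 + - u 0" by (metis h)
        finally have "(2::real) *\<^sub>R u 0 = 0" by simp
        then show False using u0 by simp
      qed
      then show ?thesis using c u0 \<open>c = 1 \<or> c = -1\<close> by (auto simp: \<epsilon>_def)
    qed
    have "(\<Sum>i<n. r i *\<^sub>R u i) = (\<Sum>i<n. (\<epsilon> i * r i) *\<^sub>R u 0)"
    proof (rule sum.cong)
      fix i assume "i \<in> {..<n}"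
      then have "u i = \<epsilon> i *\<^sub>R u 0" using ue by blast
      then show "r i *\<^sub>R u i = (\<epsilon> i * r i) *\<^sub>R u 0" by (simp add: algebra_simps)
    qed simp
    also have "\<dots> = (\<Sum>i<n. \<epsilon> i * r i) *\<^sub>R u 0" by (simp add: scaleR_sum_left)
    finally have "(\<Sum>i<n. \<epsilon> i * r i) = 0" using usum u0 by simp
    moreover have "\<epsilon> 0 = 1" by (simp add: \<epsilon>_def)
    ultimately show False using assms(4) ue by blast
  qed
  have mem1: "mat 1 \<in> stabilizer n u"
    by (simp add: stabilizer_def SO_def orthogonal_matrix_id)
  have main: "\<exists>Q. orthogonal_matrix Q \<and> (\<forall>j\<in>T. column j Q \<in> V) \<and> V \<subseteq> span ((\<lambda>j. column j Q) ` T)"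
    if "card T = dim V" for T
    using exQ[OF sV that] .
  have triv: False if cT: "card T = dim V" and fT: "fixT T = {mat 1}" for T
  proof -
    obtain Q where Q: "orthogonal_matrix Q" "\<forall>j\<in>T. column j Q \<in> V" "V \<subseteq> span ((\<lambda>j. column j Q) ` T)"
      using main[OF cT] by blast
    have bj: "bij_betw (\<lambda>A. transpose Q ** A ** Q) (stabilizer n u) {mat 1}"
      using stab_bij(1)[OF Q(1), of T u n, folded V_def, OF Q(2,3)] fT by simp
    have "stabilizer n u = {mat 1}"
    proof safe
      fix A assume A: "A \<in> stabilizer n u"
      let ?psi = "\<lambda>A. transpose Q ** A ** Q"
      have inj: "inj_on ?psi (stabilizer n u)" and im: "?psi ` stabilizer n u = {mat 1}"
        using bj by (auto simp: bij_betw_def)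
      have "?psi A \<in> {mat 1}" "?psi (mat 1) \<in> {mat 1}"
        using im A mem1 by (blast, blast)
      then have "?psi A = ?psi (mat 1)" by simp
      then show "A = mat 1" using inj_onD[OF inj] A mem1 by blast
    qed (rule mem1)
    then show False using assms(6) by simp
  qed
  have isoT: "iso_to_SO (stabilizer n u) K" if cT: "card T = dim V" and iT: "iso_to_SO (fixT T) K" for T and K :: "'k::finite itself"
  proof -
    obtain Q where Q: "orthogonal_matrix Q" "\<forall>j\<in>T. column j Q \<in> V" "V \<subseteq> span ((\<lambda>j. column j Q) ` T)"
      using main[OF cT] by blast
    note sb = stab_bij[OF Q(1), of T u n, folded V_def, OF Q(2,3)]
    obtain \<phi> :: "real^5^5 \<Rightarrow> real^'k^'k" where \<phi>: "bij_betw \<phi> (fixT T) (SO K)"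
      "\<forall>A\<in>fixT T. \<forall>B\<in>fixT T. \<phi> (A ** B) = \<phi> A ** \<phi> B"
      using iT unfolding iso_to_SO_def by blast
    have "bij_betw (\<phi> \<circ> (\<lambda>A. transpose Q ** A ** Q)) (stabilizer n u) (SO K)"
      using bij_betw_trans[OF sb(1) \<phi>(1)] .
    moreover have "\<forall>A\<in>stabilizer n u. \<forall>B\<in>stabilizer n u.
        (\<phi> \<circ> (\<lambda>A. transpose Q ** A ** Q)) (A ** B) = (\<phi> \<circ> (\<lambda>A. transpose Q ** A ** Q)) A ** (\<phi> \<circ> (\<lambda>A. transpose Q ** A ** Q)) B"
    proof (intro ballI)
      fix A B assume "A \<in> stabilizer n u" "B \<in> stabilizer n u"
      then have "transpose Q ** A ** Q \<in> fixT T" "transpose Q ** B ** Q \<in> fixT T"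
        using sb(1) by (auto simp: bij_betw_def)
      then show "(\<phi> \<circ> (\<lambda>A. transpose Q ** A ** Q)) (A ** B) = (\<phi> \<circ> (\<lambda>A. transpose Q ** A ** Q)) A ** (\<phi> \<circ> (\<lambda>A. transpose Q ** A ** Q)) B"
        using \<phi>(2) sb(2) by simp
    qed
    ultimately show ?thesis unfolding iso_to_SO_def by blast
  qed
  consider "dim V = 2" | "dim V = 3" | "dim V = 4" | "dim V = 5" using d0 d1 d5 by linarith
  then show ?thesis
  proof cases
    case 1
    have "card {1,2::5} = dim V" using 1 by simp
    then show ?thesis using isoT iso3 by blast
  next
    case 2
    have "card {1,2,3::5} = dim V" using 2 by simp
    then show ?thesis using isoT iso2 by blast
  next
    case 3
    have "card {1,2,3,4::5} = dim V" using 3 by simp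
    then show ?thesis using triv fixT4 by blast
  next
    case 4
    have "card (UNIV::5 set) = dim V" using 4 by simp
    then show ?thesis using triv fixT5 by blast
  qed
qed

end
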